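(* Let $D,d_1,d_2\in\mathbb{Z}$ and let $T=(T_{r,k})_{r,k\ge 0}$ be a number triangle with $T_{r,0}=T_{0,0}+rd_2$ and $T_{0,k}=T_{0,0}+kd_1$ for all $r,k\ge 0$, with $T_{r,k}\neq 0$ for all $r,k\ge 0$, and with $$T_{r,k}=\frac{T_{r,k-1}\cdot T_{r-1,k}+D}{T_{r-1,k-1}}\quad\text{for all } r,k\ge 1.$$ Then there exist $c,d\in\mathbb{Z}$ such that $T=T(c,d,d_1,d_2)$ (i.e. $T_{r,k}=c+kd_1+rd_2+rkd$ for all $r,k\ge 0$) and $D=cd-d_1d_2$.
   Context: A number triangle is an array of integers $T_{r,k}$ indexed by integers $r,k\ge 0$ ($T_{r,k}$ being the $k$-th entry on the $r$-th major diagonal, row $n$ consisting of the entries with $r+k=n$). For $c,d,d_1,d_2\in\mathbb{Z}$, the Generalized Rascal Triangle $T(c,d,d_1,d_2)$ is the number triangle with $T_{r,k}=c+kd_1+rd_2+rkd$. *)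

theory Defs
  imports Main "HOL.Real"
begin

definition rascal :: "int \<Rightarrow> int \<Rightarrow> int \<Rightarrow> int \<Rightarrow> nat \<Rightarrow> nat \<Rightarrow> int" where
  "rascal c d d1 d2 r k = c + int k * d1 + int r * d2 + int r * int k * d"

end

theory Submission
  imports Defs
begin

lemma rascal_id:
  "rascal c d d1 d2 (Suc a) (Suc b) * rascal c d d1 d2 a b =
   rascal c d d1 d2 (Suc a) b * rascal c d d1 d2 a (Suc b) + (c * d - d1 * d2)"
  unfolding rascal_def by (simp add: algebra_simps)

theorem mainTheorem4:
  fixes T :: "nat \<Rightarrow> nat \<Rightarrow> int" and D d1 d2 :: int
  assumes "\<And>r. T r 0 = T 0 0 + int r * d2"
    and "\<And>k. T 0 k = T 0 0 + int k * d1"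
    and "\<And>r k. T r k \<noteq> 0"
    and "\<And>r k. r \<ge> 1 \<Longrightarrow> k \<ge> 1 \<Longrightarrow>
           real_of_int (T r k) =
             (real_of_int (T r (k - 1)) * real_of_int (T (r - 1) k) + real_of_int D)
               / real_of_int (T (r - 1) (k - 1))"
  shows "\<exists>c d :: int. (\<forall>r k. T r k = rascal c d d1 d2 r k) \<and> D = c * d - d1 * d2"
proof -
  have rec: "T (Suc a) (Suc b) * T a b = T (Suc a) b * T a (Suc b) + D" for a b
  proof -
    have "real_of_int (T (Suc a) (Suc b)) =
      (real_of_int (T (Suc a) b) * real_of_int (T a (Suc b)) + real_of_int D) / real_of_int (T a b)"
      using assms(4)[of "Suc a" "Suc b"] by simp
    then have "real_of_int (T (Suc a) (Suc b)) * real_of_int (T a b) =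
      real_of_int (T (Suc a) b) * real_of_int (T a (Suc b)) + real_of_int D"
      using assms(3)[of a b] by (simp add: field_simps)
    then show ?thesis by (metis of_int_add of_int_eq_iff of_int_mult)
  qed
  define c where "c = T 0 0"
  define d where "d = T 1 1 - c - d1 - d2"
  have DD: "D = c * d - d1 * d2"
    using rec[of 0 0] assms(1)[of 1] assms(2)[of 1] unfolding c_def d_def
    by (simp add: algebra_simps)
  let ?R = "rascal c d d1 d2"
  have main: "\<forall>r k. r + k = n \<longrightarrow> T r k = ?R r k" for n
  proof (induction n rule: less_induct)
    case (less n)
    show ?case
    proof (intro allI impI)
      fix r k assume rk: "r + k = n"
      show "T r k = ?R r k"
      proof (cases r)
        case 0 then show ?thesis using assms(2)[of k] by (simp add: rascal_def c_def)
      next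
        case (Suc a) note ra = this
        show ?thesis
        proof (cases k)
          case 0 then show ?thesis using assms(1)[of r] by (simp add: rascal_def c_def)
        next
          case (Suc b)
          have h1: "T (Suc a) b = ?R (Suc a) b" using less.IH[of "Suc a + b"] rk ra Suc by auto
          have h2: "T a (Suc b) = ?R a (Suc b)" using less.IH[of "a + Suc b"] rk ra Suc by auto
          have h3: "T a b = ?R a b" using less.IH[of "a + b"] rk ra Suc by auto
          have "T (Suc a) (Suc b) * T a b = ?R (Suc a) (Suc b) * T a b"
            using rec[of a b] rascal_id[of c d d1 d2 a b] h1 h2 h3 DD by simp
          then show ?thesis using assms(3)[of a b] ra Suc by simp
        qed
      qed
    qed
  qed
  show ?thesis using main DD by blast
qed

end
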